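(* Let $\mathbf{a}$ be a CSCA and $\xi\in\mathcal{P}^2$ a non-zero vector with $\mathbf{a}\xi=\xi$. Then $\mathbf{a}$ is periodic with period two, i.e. $\mathbf{a}^2=\mathbb{1}$ (equivalently $\mathrm{tr}\,\mathbf{a}=0$).
   Context: $\mathcal{P}$ is the ring of Laurent polynomials in $u$ over $\mathbb{Z}_2$, $\mathcal{R}$ its subring of palindromes ($p(u^{-1})=p(u)$). A CSCA is a $2\times2$ matrix with entries in $\mathcal{R}$ and determinant $1$, acting on $\mathcal{P}^2$. *)

theory Defs
  imports "HOL-Analysis.Analysis" "HOL-Library.Z2" "HOL-Computational_Algebra.Formal_Laurent_Series"
begin

text \<open>Laurent polynomials over Z_2: formal Laurent series over the field bit
  with finitely many non-zero coefficients (the ring P).\<close>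
definition laurent_poly :: "bit fls \<Rightarrow> bool" where
  "laurent_poly p \<longleftrightarrow> finite {n. fls_nth p n \<noteq> 0}"

text \<open>Palindromes (the subring R): p(u^-1) = p(u), i.e. coefficient of u^(-n) equals that of u^n.\<close>
definition palindrome :: "bit fls \<Rightarrow> bool" where
  "palindrome p \<longleftrightarrow> laurent_poly p \<and> (\<forall>n. fls_nth p (-n) = fls_nth p n)"

definition CSCA :: "bit fls ^ 2 ^ 2 \<Rightarrow> bool" where
  "CSCA a \<longleftrightarrow> (\<forall>i j. palindrome (a $ i $ j)) \<and> det a = 1"

end

theory Submission
  imports Defs
begin

lemma char2: "(x::bit fls) + x = 0"
  by (rule fls_eqI) simp

lemma char2': "- (x::bit fls) = x"
  using char2[of x] by (metis add_eq_0_iff)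

theorem mainTheorem6:
  fixes a :: "bit fls ^ 2 ^ 2" and \<xi> :: "bit fls ^ 2"
  assumes "CSCA a"
    and "\<forall>i. laurent_poly (\<xi> $ i)"
    and "\<xi> \<noteq> 0"
    and "a *v \<xi> = \<xi>"
  shows "a ** a = mat 1 \<and> trace a = 0"
proof -
  define p where "p = a$1$1"
  define q where "q = a$1$2"
  define r where "r = a$2$1"
  define t where "t = a$2$2"
  define x where "x = \<xi>$1"
  define y where "y = \<xi>$2"
  have det: "p*t - q*r = 1" using assms(1) unfolding CSCA_def det_2 p_def q_def r_def t_def by simp
  have e1: "p*x + q*y = x" and e2: "r*x + t*y = y"
    using assms(4) unfolding vec_eq_iff forall_2 matrix_vector_mult_def sum_2 p_def q_def r_def t_def x_def y_def
    by (auto simp: mult.commute)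
  have nz: "x \<noteq> 0 \<or> y \<noteq> 0"
    using assms(3) unfolding vec_eq_iff forall_2 x_def y_def by auto
  define D where "D = (p-1)*(t-1) - q*r"
  have d1: "D * x = 0"
  proof -
    have "(p-1)*x + q*y = 0" "r*x + (t-1)*y = 0" using e1 e2 by (simp_all add: algebra_simps)
    hence "(t-1)*((p-1)*x + q*y) - q*(r*x + (t-1)*y) = 0" by simp
    thus ?thesis unfolding D_def by (simp add: algebra_simps)
  qed
  have d2: "D * y = 0"
  proof -
    have "(p-1)*x + q*y = 0" "r*x + (t-1)*y = 0" using e1 e2 by (simp_all add: algebra_simps)
    hence "(p-1)*(r*x + (t-1)*y) - r*((p-1)*x + q*y) = 0" by simp
    thus ?thesis unfolding D_def by (simp add: algebra_simps)
  qed
  have "D = 0" using d1 d2 nz by auto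
  hence "p*t - q*r - p - t + 1 = 0" unfolding D_def by (simp add: algebra_simps)
  hence "1 - p - t + 1 = 0" using det by simp
  hence ps: "p + t = 0"
    by (metis (no_types, lifting) add.commute add_diff_cancel_left' char2 diff_add_cancel diff_diff_eq2 diff_zero)
  hence sp: "t = p" by (metis add_eq_0_iff char2')
  have tr: "trace a = 0" using ps unfolding trace_def sum_2 p_def t_def by simp
  have det': "p*p + q*r = 1" using det sp by (simp add: char2' minus_mult_right[symmetric] diff_conv_add_uminus)
  have "a ** a = mat 1"
    unfolding vec_eq_iff forall_2 matrix_matrix_mult_def mat_def sum_2
    using det' sp char2
    by (simp add: p_def[symmetric] q_def[symmetric] r_def[symmetric] t_def[symmetric] algebra_simps
         distrib_left[symmetric] distrib_right[symmetric])
  with tr show ?thesis by simp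
qed

end
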